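(* The unit interval $I=[0,1]$ and, for every integer $n \ge 1$, the sphere $S^n$ are reconstructible.
   Context: For a topological space $X$ and $x \in X$, the set $X\setminus\{x\}$ carries the subspace topology. A card of $X$ is a space homeomorphic to $X \setminus \{x\}$ for some $x \in X$. The deck of $X$ is $\mathcal{D}(X)=\{[X\setminus\{x\}]_\sim : x \in X\}$, where $[Y]_\sim$ denotes the homeomorphism class of $Y$. A space $Z$ is a reconstruction of $X$ if $\mathcal{D}(Z)=\mathcal{D}(X)$. A space $X$ is reconstructible if every reconstruction of $X$ is homeomorphic to $X$. *)

theory Defs
  imports "HOL-Analysis.Analysis"
begin

definition card_at :: "'a topology \<Rightarrow> 'a \<Rightarrow> 'a topology" where
  "card_at X x = subtopology X (topspace X - {x})"

text \<open>Equality of decks (sets of homeomorphism classes of cards); the two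
spaces may live on different carrier types.\<close>
definition same_deck :: "'a topology \<Rightarrow> 'b topology \<Rightarrow> bool" where
  "same_deck X Z \<longleftrightarrow>
     (\<forall>x\<in>topspace X. \<exists>z\<in>topspace Z. card_at X x homeomorphic_space card_at Z z) \<and>
     (\<forall>z\<in>topspace Z. \<exists>x\<in>topspace X. card_at Z z homeomorphic_space card_at X x)"

definition is_reconstruction :: "'b topology \<Rightarrow> 'a topology \<Rightarrow> bool" where
  "is_reconstruction Z X \<longleftrightarrow> same_deck Z X"

text \<open>X is reconstructible with respect to reconstructions carried by type 'b.
Reconstructibility in the paper's sense is this property for all types 'b.\<close>
definition reconstructible_in :: "'a topology \<Rightarrow> 'b itself \<Rightarrow> bool" where
  "reconstructible_in X _ \<longleftrightarrow>
     (\<forall>Z :: 'b topology. is_reconstruction Z X \<longrightarrow> Z homeomorphic_space X)"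

end

theory Submission
  imports Defs "HOL-Homology.Invariance_of_Domain"
begin


lemma topspace_card_at [simp]: "topspace (card_at X x) = topspace X - {x}"
  by (auto simp: card_at_def)

lemma homeomorphic_space_infinite:
  assumes "X homeomorphic_space Y" "infinite (topspace X)"
  shows "infinite (topspace Y)"
proof -
  obtain f where f: "homeomorphic_map X Y f"
    using assms(1) homeomorphic_map_maps homeomorphic_space_def by blast
  then have "f ` topspace X = topspace Y" "inj_on f (topspace X)"
    using homeomorphic_imp_surjective_map homeomorphic_imp_injective_map by blast+
  then show ?thesis using assms(2) finite_image_iff by metis
qed

lemma inf_pick: "infinite S \<Longrightarrow> finite F \<Longrightarrow> \<exists>x\<in>S. x \<notin> F"
  by (metis finite_subset subsetI)

lemma T1_from_cards:
  assumes H: "\<And>z. z \<in> topspace Z \<Longrightarrow> Hausdorff_space (card_at Z z)"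
    and inf: "infinite (topspace Z)"
  shows "t1_space Z"
  unfolding t1_space_closedin_singleton
proof
  fix z assume z: "z \<in> topspace Z"
  obtain d where d: "d \<in> topspace Z" "d \<notin> {z}"
    using inf_pick[OF inf, of "{z}"] by blast
  obtain e where e: "e \<in> topspace Z" "e \<notin> {z,d}"
    using inf_pick[OF inf, of "{z,d}"] by blast
  have "closedin (card_at Z d) {z}"
    using H[OF d(1)] Hausdorff_imp_t1_space t1_space_closedin_singleton z d by fastforce
  then obtain C1 where C1: "closedin Z C1" "{z} = C1 \<inter> (topspace Z - {d})"
    by (auto simp: card_at_def closedin_subtopology)
  have "closedin (card_at Z e) {z}"
    using H[OF e(1)] Hausdorff_imp_t1_space t1_space_closedin_singleton z e by fastforce
  then obtain C2 where C2: "closedin Z C2" "{z} = C2 \<inter> (topspace Z - {e})"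
    by (auto simp: card_at_def closedin_subtopology)
  have "C1 \<subseteq> topspace Z" "C2 \<subseteq> topspace Z" using C1(1) C2(1) closedin_subset by blast+
  have "C1 \<inter> C2 = {z}"
  proof
    show "{z} \<subseteq> C1 \<inter> C2" using C1(2) C2(2) by blast
    show "C1 \<inter> C2 \<subseteq> {z}"
    proof
      fix y assume y: "y \<in> C1 \<inter> C2"
      show "y \<in> {z}"
      proof (cases "y = d")
        case True
        then have "y \<in> C2 \<inter> (topspace Z - {e})" using y e d \<open>C2 \<subseteq> topspace Z\<close> by blast
        then show ?thesis using C2(2) by blast
      next
        case False
        then have "y \<in> C1 \<inter> (topspace Z - {d})" using y \<open>C1 \<subseteq> topspace Z\<close> by blast
        then show ?thesis using C1(2) by blast
      qed
    qed
  qed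
  then show "closedin Z {z}" using C1 C2 by (metis closedin_Int)
qed

lemma Hausdorff_from_cards:
  assumes H: "\<And>z. z \<in> topspace Z \<Longrightarrow> Hausdorff_space (card_at Z z)"
    and inf: "infinite (topspace Z)"
  shows "Hausdorff_space Z"
proof -
  have t1: "t1_space Z" by (rule T1_from_cards[OF H inf])
  show ?thesis unfolding Hausdorff_space_def
  proof (intro allI impI)
    fix a b assume ab: "a \<in> topspace Z \<and> b \<in> topspace Z \<and> a \<noteq> b"
    obtain c where c: "c \<in> topspace Z" "c \<notin> {a,b}"
      using inf_pick[OF inf, of "{a,b}"] by blast
    have "closedin Z {c}" using t1_space_closedin_singleton[THEN iffD1, OF t1] c(1) by blast
    then have op: "openin Z (topspace Z - {c})" by (rule openin_diff[OF openin_topspace])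
    obtain U V where UV: "openin (card_at Z c) U" "openin (card_at Z c) V" "a \<in> U" "b \<in> V" "disjnt U V"
    proof -
      have "a \<in> topspace (card_at Z c)" "b \<in> topspace (card_at Z c)" using ab c by auto
      then show ?thesis using H[OF c(1)] ab that unfolding Hausdorff_space_def by meson
    qed
    have "openin Z U" "openin Z V" 
      using openin_trans_full[OF UV(1)[unfolded card_at_def] op] openin_trans_full[OF UV(2)[unfolded card_at_def] op] by auto
    then show "\<exists>U V. openin Z U \<and> openin Z V \<and> a \<in> U \<and> b \<in> V \<and> disjnt U V"
      using UV by blast
  qed
qed

lemma ext_map:
  assumes HZ: "Hausdorff_space Z" and t1: "t1_space Z" and cX: "compact_space X"
    and q: "q \<in> topspace Z" and p: "p \<in> topspace X"
    and hk: "homeomorphic_maps (card_at Z q) (card_at X p) h k"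
  shows "continuous_map Z X (\<lambda>z. if z = q then p else h z)"
    and "(\<lambda>z. if z = q then p else h z) ` topspace Z = topspace X"
    and "inj_on (\<lambda>z. if z = q then p else h z) (topspace Z)"
proof -
  define H where "H = (\<lambda>z. if z = q then p else h z)"
  have ch: "continuous_map (card_at Z q) (card_at X p) h"
    and ck: "continuous_map (card_at X p) (card_at Z q) k"
    and kh: "\<And>z. z \<in> topspace Z - {q} \<Longrightarrow> k (h z) = z"
    and hk': "\<And>y. y \<in> topspace X - {p} \<Longrightarrow> h (k y) = y"
    using hk by (auto simp: homeomorphic_maps_def)
  have hmap: "\<And>z. z \<in> topspace Z - {q} \<Longrightarrow> h z \<in> topspace X - {p}"
    using continuous_map_image_subset_topspace[OF ch] by auto
  have kmap: "\<And>y. y \<in> topspace X - {p} \<Longrightarrow> k y \<in> topspace Z - {q}"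
    using continuous_map_image_subset_topspace[OF ck] by auto
  have Hq: "H q = p" and Hz: "\<And>z. z \<noteq> q \<Longrightarrow> H z = h z" by (auto simp: H_def)
  have "H ` topspace Z = topspace X"
  proof
    show "H ` topspace Z \<subseteq> topspace X" using p hmap by (auto simp: H_def)
    show "topspace X \<subseteq> H ` topspace Z"
    proof
      fix y assume y: "y \<in> topspace X"
      show "y \<in> H ` topspace Z"
      proof (cases "y = p")
        case True then show ?thesis using q Hq by (intro image_eqI[where x=q]) auto
      next
        case False then have "k y \<in> topspace Z - {q}" "h (k y) = y" using kmap hk' y by auto
        then show ?thesis using Hz by (intro image_eqI[where x="k y"]) auto
      qed
    qed
  qed
  then show "(\<lambda>z. if z = q then p else h z) ` topspace Z = topspace X" by (simp add: H_def)
  have "inj_on H (topspace Z)"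
    unfolding inj_on_def
  proof (intro ballI impI)
    fix a b assume a: "a \<in> topspace Z" and b: "b \<in> topspace Z" and e: "H a = H b"
    show "a = b"
    proof (cases "a = q"; cases "b = q")
      assume "a = q" "b \<noteq> q" then show ?thesis using e hmap[of b] b Hq Hz by auto
    next
      assume "a \<noteq> q" "b = q" then show ?thesis using e hmap[of a] a Hq Hz by auto
    next
      assume ne: "a \<noteq> q" "b \<noteq> q"
      then have "k (h a) = a" "k (h b) = b" using kh a b by auto
      then show ?thesis using e Hz ne by metis
    qed auto
  qed
  then show "inj_on (\<lambda>z. if z = q then p else h z) (topspace Z)" by (simp add: H_def)
  have "continuous_map Z X H"
    unfolding continuous_map_closedin
  proof (intro conjI allI impI)
    show "H \<in> topspace Z \<rightarrow> topspace X" using p hmap by (auto simp: H_def)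
    fix C assume C: "closedin X C"
    have CX: "C \<subseteq> topspace X" using closedin_subset C by auto
    show "closedin Z {x \<in> topspace Z. H x \<in> C}"
    proof (cases "p \<in> C")
      case False
      have cC: "compactin (card_at X p) C"
        using closedin_compact_space[OF cX C] CX False by (auto simp: card_at_def compactin_subtopology)
      have "compactin (card_at Z q) (k ` C)" using image_compactin[OF cC ck] .
      then have "compactin Z (k ` C)" by (simp add: card_at_def compactin_subtopology)
      then have cl: "closedin Z (k ` C)" using compactin_imp_closedin HZ by blast
      have "{x \<in> topspace Z. H x \<in> C} = k ` C"
      proof (intro equalityI subsetI)
        fix x assume x: "x \<in> {x \<in> topspace Z. H x \<in> C}"
        then have "x \<noteq> q" using False Hq by auto
        then have "h x \<in> C" "k (h x) = x" using x Hz kh by auto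
        then show "x \<in> k ` C" by (metis image_eqI)
      next
        fix x assume "x \<in> k ` C"
        then obtain y where y: "y \<in> C" "x = k y" by auto
        then have "y \<in> topspace X - {p}" using CX False by auto
        then have "x \<in> topspace Z - {q}" "H x = y" using kmap hk' Hz y by auto
        then show "x \<in> {x \<in> topspace Z. H x \<in> C}" using y by auto
      qed
      then show ?thesis using cl by simp
    next
      case True
      have "closedin (card_at X p) (C - {p})"
        unfolding card_at_def closedin_subtopology using C CX by (intro exI[where x=C]) auto
      then have "closedin (card_at Z q) {x \<in> topspace (card_at Z q). h x \<in> C - {p}}"
        using continuous_map_closedin[THEN iffD1, OF ch] by blast
      then obtain D where D: "closedin Z D" "{x \<in> topspace Z - {q}. h x \<in> C - {p}} = D \<inter> (topspace Z - {q})"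
        by (auto simp: card_at_def closedin_subtopology)
      have DZ: "D \<subseteq> topspace Z" using D(1) closedin_subset by auto
      have "{x \<in> topspace Z. H x \<in> C} = D \<union> {q}"
      proof (intro equalityI subsetI)
        fix x assume x: "x \<in> {x \<in> topspace Z. H x \<in> C}"
        show "x \<in> D \<union> {q}"
        proof (cases "x = q")
          case False
          then have "x \<in> {x \<in> topspace Z - {q}. h x \<in> C - {p}}" using x Hz hmap[of x] by auto
          then show ?thesis using D(2) by blast
        qed simp
      next
        fix x assume x: "x \<in> D \<union> {q}"
        show "x \<in> {x \<in> topspace Z. H x \<in> C}"
        proof (cases "x = q")
          case False
          then have "x \<in> D \<inter> (topspace Z - {q})" using x DZ by auto
          then have "x \<in> {x \<in> topspace Z - {q}. h x \<in> C - {p}}" using D(2) by blast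
          then show ?thesis using Hz False by auto
        qed (use q True Hq in auto)
      qed
      moreover have "closedin Z {q}" using t1_space_closedin_singleton[THEN iffD1, OF t1] q by blast
      ultimately show ?thesis using D(1) closedin_Un[of Z D "{q}"] by simp
    qed
  qed
  then show "continuous_map Z X (\<lambda>z. if z = q then p else h z)" by (simp add: H_def)
qed

lemma homeomorphic_no_isolated:
  assumes "X homeomorphic_space Y" "\<And>y. \<not> openin Y {y}"
  shows "\<not> openin X {x}"
proof
  assume op: "openin X {x}"
  obtain g where g: "homeomorphic_map X Y g" using assms(1) homeomorphic_space by blast
  then have "openin Y (g ` {x})" using op homeomorphic_imp_open_map open_map_def by blast
  then show False using assms(2)[of "g x"] by simp
qed

lemma interval_card_props:
  fixes x :: real assumes x: "x \<in> {0..1}"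
  shows "Hausdorff_space (card_at (top_of_set {0..1}) x)"
    and "infinite (topspace (card_at (top_of_set {0..1}) x))"
    and "locally_connected_space (card_at (top_of_set {0..1}) x)"
    and "\<not> openin (card_at (top_of_set {0..1}) x) {y}"
proof -
  show "Hausdorff_space (card_at (top_of_set {0..1}) x)"
    by (simp add: card_at_def Hausdorff_space_subtopology)
  have "infinite {0..1::real}" by simp
  then show "infinite (topspace (card_at (top_of_set {0..1}) x))" by simp
  have op: "openin (top_of_set {0..1}) ({0..1} - {x})"
    unfolding openin_subtopology by (intro exI[where x="- {x}"]) auto
  show "locally_connected_space (card_at (top_of_set {0..1}) x)"
    unfolding card_at_def using locally_connected_space_open_subset[OF locally_connected_real_interval(1) op]
    by simp
  show "\<not> openin (card_at (top_of_set {0..1}) x) {y}"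
  proof
    assume "openin (card_at (top_of_set {0..1}) x) {y}"
    then obtain T where T: "open T" "{y} = T \<inter> ({0..1} - {x})"
      by (auto simp: card_at_def subtopology_subtopology openin_subtopology)
    have "y \<in> T \<inter> ({0..1} - {x})" using T(2) by blast
    then have y: "y \<in> T" "y \<in> {0..1}" "y \<noteq> x" by auto
    obtain e where e: "e > 0" "ball y e \<subseteq> T" using open_contains_ball[THEN iffD1, OF T(1)] y(1) by blast
    define d where "d = min (e/2) (\<bar>y - x\<bar>/2)"
    have ax: "0 < \<bar>y - x\<bar>" "\<bar>y - x\<bar> \<le> 1" using y x by auto
    have d: "d > 0" "d < e" "d < \<bar>y - x\<bar>" "d \<le> 1/2" using e ax unfolding d_def by (auto simp: min_def)
    obtain y' where y': "y' \<in> {0..1}" "y' \<noteq> x" "y' \<noteq> y" "\<bar>y' - y\<bar> < e"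
    proof (cases "y + d \<le> 1")
      case True then show ?thesis using that[of "y + d"] d y by auto
    next
      case False then show ?thesis using that[of "y - d"] d y by auto
    qed
    then have "y' \<in> ball y e" by (simp add: dist_real_def abs_minus_commute)
    then have "y' \<in> T \<inter> ({0..1} - {x})" using e y' by auto
    then show False using T(2) y' by blast
  qed
qed

lemma interval_reconstructible: "reconstructible_in (top_of_set {0..1::real}) TYPE('b)"
  unfolding reconstructible_in_def is_reconstruction_def same_deck_def
proof (intro allI impI)
  fix Z :: "'b topology"
  let ?I = "top_of_set {0..1::real}"
  assume deck: "(\<forall>z\<in>topspace Z. \<exists>x\<in>topspace ?I. card_at Z z homeomorphic_space card_at ?I x) \<and>
     (\<forall>x\<in>topspace ?I. \<exists>z\<in>topspace Z. card_at ?I x homeomorphic_space card_at Z z)"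
  then have D1: "\<And>z. z \<in> topspace Z \<Longrightarrow> \<exists>x\<in>{0..1}. card_at Z z homeomorphic_space card_at ?I x"
    and D2: "\<And>x. x \<in> {0..1} \<Longrightarrow> \<exists>z\<in>topspace Z. card_at ?I x homeomorphic_space card_at Z z"
    by auto
  obtain q where q: "q \<in> topspace Z" "card_at ?I 0 homeomorphic_space card_at Z q"
    using D2[of 0] by auto
  have "infinite (topspace (card_at Z q))"
    using homeomorphic_space_infinite[OF q(2) interval_card_props(2)] by simp
  then have infZ: "infinite (topspace Z)" by (auto intro: finite_subset)
  have HC: "\<And>z. z \<in> topspace Z \<Longrightarrow> Hausdorff_space (card_at Z z)"
    using D1 homeomorphic_Hausdorff_space interval_card_props(1) by blast
  have HZ: "Hausdorff_space Z" by (rule Hausdorff_from_cards[OF HC infZ])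
  have t1Z: "t1_space Z" by (rule T1_from_cards[OF HC infZ])
  have cardopen: "\<And>w. w \<in> topspace Z \<Longrightarrow> openin Z (topspace Z - {w})"
    using t1_space_closedin_singleton[THEN iffD1, OF t1Z] by (blast intro: openin_diff)
  obtain h k where hk: "homeomorphic_maps (card_at Z q) (card_at ?I 0) h k"
    using q(2) homeomorphic_space_sym homeomorphic_space_def by blast
  have hm: "homeomorphic_map (card_at Z q) (card_at ?I 0) h" using hk homeomorphic_map_maps by blast
  have cI: "compact_space ?I" by (simp add: compact_space_subtopology)
  define H where "H = (\<lambda>z. if z = q then (0::real) else h z)"
  have contH: "continuous_map Z ?I H" and surjH: "H ` topspace Z = topspace ?I"
    and injH: "inj_on H (topspace Z)"
    using ext_map[OF HZ t1Z cI q(1) _ hk] unfolding H_def by auto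
  have "open_map Z ?I H"
    unfolding open_map_def
  proof (intro allI impI)
    fix U assume U: "openin Z U"
    have UZ: "U \<subseteq> topspace Z" using U openin_subset by auto
    have A: "openin ?I (H ` (U - {q}))"
    proof -
      have "openin (card_at Z q) (U - {q})"
        unfolding card_at_def openin_subtopology using UZ U by (intro exI[of _ U]) auto
      then have "openin (card_at ?I 0) (h ` (U - {q}))"
        using homeomorphic_imp_open_map[OF hm] open_map_def by blast
      moreover have "H ` (U - {q}) = h ` (U - {q})" by (auto simp: H_def)
      moreover have "openin ?I ({0..1} - {0})"
        unfolding openin_subtopology by (intro exI[where x="- {0}"]) auto
      ultimately show ?thesis using openin_trans_full unfolding card_at_def by fastforce
    qed
    show "openin ?I (H ` U)"
    proof (cases "q \<in> U")
      case False
      then have "U - {q} = U" by auto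
      then show ?thesis using A by simp
    next
      case True
      obtain w where w: "w \<in> topspace Z" "w \<notin> {q}" using inf_pick[OF infZ, of "{q}"] by blast
      obtain x where x: "x \<in> {0..1}" "card_at Z w homeomorphic_space card_at ?I x" using D1[OF w(1)] by blast
      have lc: "locally_connected_space (card_at Z w)"
        using homeomorphic_locally_connected_space[OF x(2)] interval_card_props(3)[OF x(1)] by simp
      have "openin (card_at Z w) (U - {w})"
        unfolding card_at_def openin_subtopology using UZ U by (intro exI[of _ U]) auto
      moreover have "q \<in> U - {w}" using True w by auto
      ultimately obtain V where V: "openin (card_at Z w) V" "connectedin (card_at Z w) V" "q \<in> V" "V \<subseteq> U - {w}"
        using lc unfolding locally_connected_space by meson
      have "V \<noteq> {q}"
      proof
        assume "V = {q}"
        then have "openin (card_at Z w) {q}" using V(1) by simp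
        then show False using homeomorphic_no_isolated[OF x(2) interval_card_props(4)[OF x(1)]] by blast
      qed
      then obtain v where v: "v \<in> V" "v \<noteq> q" using V(3) by blast
      have VZ: "V \<subseteq> topspace Z" using V(4) UZ by auto
      have cV: "connectedin Z V" using V(2) by (simp add: card_at_def connectedin_subtopology)
      have "connectedin ?I (H ` V)" using connectedin_continuous_map_image[OF contH cV] .
      then have conn: "connected (H ` V)" by (simp add: connectedin_subtopology)
      have Hq: "H q = 0" by (simp add: H_def)
      have "H v \<in> {0..1}" using contH VZ v(1) continuous_map_image_subset_topspace by fastforce
      moreover have "H v \<noteq> 0" using injH v VZ q(1) Hq inj_on_def by (metis subsetD)
      ultimately have t: "0 < H v" "H v \<le> 1" by auto
      have "{0..H v} \<subseteq> H ` V"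
        using connected_contains_Icc[OF conn, of 0 "H v"] V(3) v(1) Hq by (metis image_eqI)
      moreover have "H ` V \<subseteq> H ` U" using V(4) by auto
      ultimately have W: "{0..<H v} \<subseteq> H ` U" by fastforce
      have Wo: "openin ?I {0..<H v}"
        unfolding openin_subtopology using t by (intro exI[where x="{-1<..<H v}"]) auto
      have "H ` U = H ` (U - {q}) \<union> {0..<H v}"
        using W True Hq t by auto
      then show ?thesis using A Wo by (simp add: openin_Un)
    qed
  qed
  then have "homeomorphic_map Z ?I H"
    using bijective_open_imp_homeomorphic_map contH surjH injH by blast
  then show "Z homeomorphic_space ?I" using homeomorphic_space by blast
qed



definition loc_euc :: "nat \<Rightarrow> 'a topology \<Rightarrow> bool" where
  "loc_euc n X \<longleftrightarrow> (\<forall>x\<in>topspace X. \<exists>N Ob. openin X N \<and> x \<in> N \<and> openin (Euclidean_space n) Ob \<and>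
      subtopology X N homeomorphic_space subtopology (Euclidean_space n) Ob)"

lemma restrict_homeo:
  assumes f: "homeomorphic_map (subtopology X N) (subtopology Y Ob) f"
    and N': "openin X N'" "N' \<subseteq> N" and Ob: "openin Y Ob"
  shows "openin Y (f ` N')" "subtopology X N' homeomorphic_space subtopology Y (f ` N')"
proof -
  have N'sub: "N' \<subseteq> topspace X \<inter> N" using N' openin_subset by auto
  have surj: "f ` (topspace X \<inter> N) = topspace Y \<inter> Ob" using homeomorphic_imp_surjective_map[OF f] by simp
  have "homeomorphic_map (subtopology (subtopology X N) N') (subtopology (subtopology Y Ob) (f ` N')) f"
  proof (rule homeomorphic_map_subtopologies[OF f])
    show "f ` (topspace (subtopology X N) \<inter> N') = topspace (subtopology Y Ob) \<inter> f ` N'"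
      using N'sub surj by auto
  qed
  moreover have "subtopology (subtopology X N) N' = subtopology X N'"
    using N'(2) by (simp add: subtopology_subtopology Int_absorb1)
  moreover have o1: "openin (subtopology X N) N'"
    unfolding openin_subtopology using N' by (intro exI[of _ N']) auto
  then have "openin (subtopology Y Ob) (f ` N')"
    using homeomorphic_imp_open_map[OF f] open_map_def by blast
  then show "openin Y (f ` N')" using openin_trans_full Ob by blast
  moreover have "f ` N' \<subseteq> Ob" using N'sub surj by auto
  then have "subtopology (subtopology Y Ob) (f ` N') = subtopology Y (f ` N')"
    by (simp add: subtopology_subtopology Int_absorb1)
  ultimately show "subtopology X N' homeomorphic_space subtopology Y (f ` N')"
    using homeomorphic_space by metis
qed

lemma loc_euc_open_subspace:
  assumes L: "loc_euc n X" and S: "openin X S" shows "loc_euc n (subtopology X S)"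
  unfolding loc_euc_def
proof
  fix x assume x: "x \<in> topspace (subtopology X S)"
  then have xS: "x \<in> S" "x \<in> topspace X" by auto
  obtain N Ob where N: "openin X N" "x \<in> N" "openin (Euclidean_space n) Ob"
     "subtopology X N homeomorphic_space subtopology (Euclidean_space n) Ob"
    using L[unfolded loc_euc_def, rule_format, OF xS(2)] by blast
  obtain f where f: "homeomorphic_map (subtopology X N) (subtopology (Euclidean_space n) Ob) f"
    using N(4) homeomorphic_space by blast
  have N'o: "openin X (N \<inter> S)" using N(1) S by (rule openin_Int)
  note R = restrict_homeo[OF f N'o _ N(3)]
  have "openin (subtopology X S) (N \<inter> S)"
    unfolding openin_subtopology using N(1) by (intro exI[of _ N]) auto
  moreover have "subtopology (subtopology X S) (N \<inter> S) = subtopology X (N \<inter> S)"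
    by (simp add: subtopology_subtopology Int_absorb1)
  ultimately show "\<exists>N Ob. openin (subtopology X S) N \<and> x \<in> N \<and> openin (Euclidean_space n) Ob \<and>
      subtopology (subtopology X S) N homeomorphic_space subtopology (Euclidean_space n) Ob"
  proof (intro exI conjI)
    show "x \<in> N \<inter> S" using xS N(2) by blast
    show "openin (Euclidean_space n) (f ` (N \<inter> S))" using R(1) by blast
    show "subtopology (subtopology X S) (N \<inter> S) homeomorphic_space subtopology (Euclidean_space n) (f ` (N \<inter> S))"
      using R(2) \<open>subtopology (subtopology X S) (N \<inter> S) = subtopology X (N \<inter> S)\<close> by simp
  qed auto
qed

lemma loc_euc_homeomorphic:
  assumes XY: "X homeomorphic_space Y" and L: "loc_euc n X" shows "loc_euc n Y"
  unfolding loc_euc_def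
proof
  fix y assume y: "y \<in> topspace Y"
  obtain g where g: "homeomorphic_map Y X g" using XY homeomorphic_space homeomorphic_space_sym by blast
  have gy: "g y \<in> topspace X" using g y homeomorphic_imp_surjective_map by blast
  obtain N Ob where N: "openin X N" "g y \<in> N" "openin (Euclidean_space n) Ob"
     "subtopology X N homeomorphic_space subtopology (Euclidean_space n) Ob"
    using L[unfolded loc_euc_def, rule_format, OF gy] by blast
  define N' where "N' = {z \<in> topspace Y. g z \<in> N}"
  have N'o: "openin Y N'" unfolding N'_def
    using openin_continuous_map_preimage[OF homeomorphic_imp_continuous_map[OF g] N(1)] .
  have "homeomorphic_map (subtopology Y N') (subtopology X N) g"
  proof (rule homeomorphic_map_subtopologies[OF g])
    have "g ` topspace Y = topspace X" using g homeomorphic_imp_surjective_map by blast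
    then show "g ` (topspace Y \<inter> N') = topspace X \<inter> N" unfolding N'_def by auto
  qed
  then have "subtopology Y N' homeomorphic_space subtopology X N" using homeomorphic_space by blast
  then have "subtopology Y N' homeomorphic_space subtopology (Euclidean_space n) Ob"
    using N(4) homeomorphic_space_trans by blast
  then show "\<exists>N Ob. openin Y N \<and> y \<in> N \<and> openin (Euclidean_space n) Ob \<and>
      subtopology Y N homeomorphic_space subtopology (Euclidean_space n) Ob"
  proof (intro exI[of _ N'] exI[of _ Ob] conjI)
    show "y \<in> N'" using N(2) y unfolding N'_def by blast
  qed (use N'o N(3) in auto)
qed

lemma loc_euc_cover:
  assumes "\<And>z. z \<in> topspace Z \<Longrightarrow> \<exists>S. openin Z S \<and> z \<in> S \<and> loc_euc n (subtopology Z S)"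
  shows "loc_euc n Z"
  unfolding loc_euc_def
proof
  fix z assume z: "z \<in> topspace Z"
  obtain S where S: "openin Z S" "z \<in> S" "loc_euc n (subtopology Z S)" using assms z by blast
  obtain N Ob where N: "openin (subtopology Z S) N" "z \<in> N" "openin (Euclidean_space n) Ob"
     "subtopology (subtopology Z S) N homeomorphic_space subtopology (Euclidean_space n) Ob"
  proof -
    have "z \<in> topspace (subtopology Z S)" using S(2) z by simp
    then show ?thesis using S(3)[unfolded loc_euc_def, rule_format] that by blast
  qed
  have "N \<subseteq> S" using N(1) openin_subset by fastforce
  then have "subtopology (subtopology Z S) N = subtopology Z N"
    by (simp add: subtopology_subtopology Int_absorb1)
  moreover have "openin Z N" using N(1) S(1) openin_trans_full by blast
  ultimately show "\<exists>N Ob. openin Z N \<and> z \<in> N \<and> openin (Euclidean_space n) Ob \<and>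
      subtopology Z N homeomorphic_space subtopology (Euclidean_space n) Ob"
  proof (intro exI conjI)
  qed (use N in auto)
qed

lemma loc_euc_open_map:
  assumes LZ: "loc_euc n Z" and LX: "loc_euc n X" and f: "continuous_map Z X f"
    and inj: "inj_on f (topspace Z)"
  shows "open_map Z X f"
  unfolding open_map_def
proof (intro allI impI)
  fix U assume U: "openin Z U"
  let ?E = "Euclidean_space n"
  show "openin X (f ` U)"
    unfolding openin_subopen[of X "f ` U"]
  proof
    fix y assume "y \<in> f ` U"
    then obtain z where z: "z \<in> U" "y = f z" by auto
    have zZ: "z \<in> topspace Z" using U z openin_subset by auto
    obtain N Ob where N: "openin Z N" "z \<in> N" "openin ?E Ob"
      "subtopology Z N homeomorphic_space subtopology ?E Ob"
      using LZ[unfolded loc_euc_def, rule_format, OF zZ] by blast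
    have fz: "f z \<in> topspace X" using f zZ continuous_map_image_subset_topspace by blast
    obtain M Ob' where M: "openin X M" "f z \<in> M" "openin ?E Ob'"
      "subtopology X M homeomorphic_space subtopology ?E Ob'"
      using LX[unfolded loc_euc_def, rule_format, OF fz] by blast
    obtain \<phi> \<phi>' where phi: "homeomorphic_maps (subtopology Z N) (subtopology ?E Ob) \<phi> \<phi>'"
      using N(4) homeomorphic_space_def by blast
    obtain \<psi> \<psi>' where psi: "homeomorphic_maps (subtopology X M) (subtopology ?E Ob') \<psi> \<psi>'"
      using M(4) homeomorphic_space_def by blast
    have phim: "homeomorphic_map (subtopology Z N) (subtopology ?E Ob) \<phi>"
      using phi homeomorphic_map_maps by blast
    have psi'm: "homeomorphic_map (subtopology ?E Ob') (subtopology X M) \<psi>'"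
      using psi homeomorphic_map_maps homeomorphic_maps_sym by blast
    have phiinv: "\<And>u. u \<in> topspace Z \<Longrightarrow> u \<in> N \<Longrightarrow> \<phi>' (\<phi> u) = u"
      using phi by (auto simp: homeomorphic_maps_def)
    have psiinv: "\<And>u. u \<in> topspace X \<Longrightarrow> u \<in> M \<Longrightarrow> \<psi>' (\<psi> u) = u"
      using psi by (auto simp: homeomorphic_maps_def)
    define U' where "U' = U \<inter> N \<inter> {w \<in> topspace Z. f w \<in> M}"
    have U'o: "openin Z U'" unfolding U'_def
      using U N(1) openin_continuous_map_preimage[OF f M(1)] by (intro openin_Int)
    have U'sub: "U' \<subseteq> topspace Z" "U' \<subseteq> N" "U' \<subseteq> U" "f ` U' \<subseteq> M" by (auto simp: U'_def)
    have zU': "z \<in> U'" using z N(2) M(2) zZ by (auto simp: U'_def)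
    have fU'X: "f ` U' \<subseteq> topspace X" using f U'sub(1) continuous_map_image_subset_topspace by blast
    note V = restrict_homeo[OF phim U'o U'sub(2) N(3)]
    have VOb: "\<phi> ` U' \<subseteq> Ob"
    proof -
      have "U' \<subseteq> topspace Z \<inter> N" using U'sub by blast
      then have "\<phi> ` U' \<subseteq> \<phi> ` (topspace Z \<inter> N)" by (rule image_mono)
      then show ?thesis
        using continuous_map_image_subset_topspace[OF homeomorphic_imp_continuous_map[OF phim]] by auto
    qed
    define g where "g = \<psi> \<circ> (f \<circ> \<phi>')"
    have c1: "continuous_map (subtopology ?E (\<phi> ` U')) (subtopology Z U') \<phi>'"
    proof -
      have "continuous_map (subtopology ?E Ob) (subtopology Z N) \<phi>'"
        using phi homeomorphic_maps_def by blast
      then have "continuous_map (subtopology ?E Ob) Z \<phi>'"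
        using continuous_map_in_subtopology by blast
      then have "continuous_map (subtopology (subtopology ?E Ob) (\<phi> ` U')) Z \<phi>'"
        by (rule continuous_map_from_subtopology)
      then have "continuous_map (subtopology ?E (\<phi> ` U')) Z \<phi>'"
        using VOb by (simp add: subtopology_subtopology Int_absorb1)
      moreover have "\<phi>' \<in> topspace (subtopology ?E (\<phi> ` U')) \<rightarrow> U'"
        using phiinv U'sub by (auto simp: Pi_iff subset_iff)
      ultimately show ?thesis using continuous_map_in_subtopology by blast
    qed
    have c2: "continuous_map (subtopology Z U') (subtopology X M) f"
      using continuous_map_from_subtopology[OF f] U'sub(4)
      by (auto simp: continuous_map_in_subtopology)
    have c3: "continuous_map (subtopology X M) ?E \<psi>"
      using psi continuous_map_in_subtopology homeomorphic_maps_def by blast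
    have cont: "continuous_map (subtopology ?E (\<phi> ` U')) ?E g"
      unfolding g_def by (rule continuous_map_compose[OF continuous_map_compose[OF c1 c2] c3])
    have gphi: "\<And>u. u \<in> U' \<Longrightarrow> g (\<phi> u) = \<psi> (f u)"
      using phiinv U'sub by (auto simp: g_def subset_iff)
    have injg: "inj_on g (\<phi> ` U')"
      unfolding inj_on_def
    proof (intro ballI impI)
      fix a b assume a: "a \<in> \<phi> ` U'" and b: "b \<in> \<phi> ` U'" and e: "g a = g b"
      then obtain u u' where u: "u \<in> U'" "a = \<phi> u" and u': "u' \<in> U'" "b = \<phi> u'" by blast
      then have "\<psi> (f u) = \<psi> (f u')" using e gphi by simp
      then have "\<psi>' (\<psi> (f u)) = \<psi>' (\<psi> (f u'))" by simp
      then have "f u = f u'" using psiinv fU'X U'sub(4) u(1) u'(1) by (metis image_subset_iff)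
      then have "u = u'" using inj U'sub(1) u(1) u'(1) inj_on_def by (metis subsetD)
      then show "a = b" using u u' by simp
    qed
    have Wo: "openin ?E (g ` (\<phi> ` U'))"
      by (rule invariance_of_domain_Euclidean_space[OF V(1) cont injg])
    have gim: "g ` (\<phi> ` U') = \<psi> ` (f ` U')"
      using gphi by (force simp: image_iff)
    have WOb: "\<psi> ` (f ` U') \<subseteq> Ob'"
    proof -
      have "f ` U' \<subseteq> topspace X \<inter> M" using fU'X U'sub(4) by blast
      then have "\<psi> ` (f ` U') \<subseteq> \<psi> ` (topspace X \<inter> M)" by (rule image_mono)
      then show ?thesis
        using continuous_map_image_subset_topspace[OF homeomorphic_imp_continuous_map[OF
          psi[unfolded homeomorphic_maps_map, THEN conjunct1]]] by auto
    qed
    have "openin (subtopology ?E Ob') (\<psi> ` (f ` U'))"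
      unfolding openin_subtopology using Wo gim WOb by (intro exI[of _ "\<psi> ` (f ` U')"]) auto
    then have "openin (subtopology X M) (\<psi>' ` (\<psi> ` (f ` U')))"
      using homeomorphic_imp_open_map[OF psi'm] open_map_def by blast
    moreover have "\<psi>' ` (\<psi> ` (f ` U')) = f ` U'"
      using psiinv fU'X U'sub(4) by (force simp: image_iff)
    ultimately have "openin X (f ` U')" using openin_trans_full M(1) by metis
    then show "\<exists>T. openin X T \<and> y \<in> T \<and> T \<subseteq> f ` U"
      using zU' z U'sub(3) by blast
  qed
qed



lemma topspace_nsphere': "topspace (nsphere n) = {x. (\<Sum>i\<le>n. x i ^ 2) = 1 \<and> (\<forall>i>n. x i = 0)}"
  by (simp add: nsphere)

lemma cm_into_nsphere:
  assumes "\<And>k. continuous_map X euclideanreal (\<lambda>x. f x k)"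
    and "\<And>x. x \<in> topspace X \<Longrightarrow> f x \<in> topspace (nsphere n)"
  shows "continuous_map X (nsphere n) f"
  using assms unfolding nsphere
  by (auto simp: continuous_map_in_subtopology continuous_map_componentwise_UNIV)

lemma cm_E_proj: "continuous_map (Euclidean_space n) euclideanreal (\<lambda>u. u i)"
  unfolding Euclidean_space_def
  by (rule continuous_map_from_subtopology) (use continuous_map_product_projection[of i UNIV "\<lambda>_. euclideanreal"] in simp)

lemma sum_atMost_split: "(\<Sum>i\<le>n. f i) = (\<Sum>i<n. f i) + (f n :: real)" for n :: nat
  using sum.lessThan_Suc[of f n] by (simp add: lessThan_Suc_atMost)

lemma Hausdorff_nsphere: "Hausdorff_space (nsphere n)"
  by (simp add: nsphere_def Hausdorff_space_subtopology Hausdorff_Euclidean_space)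

lemma compact_nsphere: "compact_space (nsphere n)"
proof -
  define T where "T = {x::nat\<Rightarrow>real. (\<Sum>i\<le>n. x i ^ 2) = 1 \<and> (\<forall>i>n. x i = 0)}"
  have cg: "continuous_map (powertop_real UNIV) euclideanreal (\<lambda>x. \<Sum>i\<le>n. x i ^ 2)"
    by (intro continuous_intros) auto
  have c1: "closedin (powertop_real UNIV) {x \<in> topspace (powertop_real UNIV). (\<Sum>i\<le>n. x i ^ 2) \<in> {1}}"
    by (rule closedin_continuous_map_preimage[OF cg]) simp
  have c2: "closedin (powertop_real UNIV) (topspace (Euclidean_space (Suc n)))"
    by (rule closedin_Euclidean_space)
  have "T = topspace (Euclidean_space (Suc n)) \<inter> {x \<in> topspace (powertop_real UNIV). (\<Sum>i\<le>n. x i ^ 2) \<in> {1}}"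
    unfolding T_def topspace_Euclidean_space by (auto simp: Suc_le_eq)
  then have clT: "closedin (powertop_real UNIV) T" using c1 c2 by (simp add: closedin_Int)
  have sub: "T \<subseteq> UNIV \<rightarrow>\<^sub>E {-1..1}"
  proof
    fix x assume x: "x \<in> T"
    have "\<bar>x i\<bar> \<le> 1" for i
    proof (cases "i \<le> n")
      case True
      have "x i ^ 2 \<le> (\<Sum>j\<le>n. x j ^ 2)"
        using True by (intro member_le_sum) auto
      then have "x i ^ 2 \<le> 1" using x by (simp add: T_def)
      then show ?thesis by (simp add: abs_square_le_1)
    next
      case False then show ?thesis using x by (simp add: T_def)
    qed
    then show "x \<in> UNIV \<rightarrow>\<^sub>E {-1..1}" by (auto simp: abs_le_iff)
  qed
  have "compactin (powertop_real UNIV) T"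
    by (rule closed_compactin[OF _ sub clT]) (simp add: compactin_PiE)
  then show ?thesis unfolding nsphere T_def[symmetric] by (rule compact_space_subtopology)
qed

lemma infinite_nsphere:
  assumes "n \<ge> 1" shows "infinite (topspace (nsphere n))"
proof -
  define p where "p = (\<lambda>a::real. \<lambda>i::nat. if i = 0 then a else if i = 1 then sqrt (1 - a^2) else 0)"
  have inS: "p a \<in> topspace (nsphere n)" if a: "a \<in> {0..1}" for a
  proof -
    have "(\<Sum>i\<le>n. p a i ^ 2) = (\<Sum>i\<in>{0,1}. p a i ^ 2)"
      using assms by (intro sum.mono_neutral_right) (auto simp: p_def)
    also have "\<dots> = a^2 + (1 - a^2)"
      using a by (simp add: p_def abs_square_le_1)
    finally show ?thesis by (auto simp: topspace_nsphere' p_def)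
  qed
  have "inj_on p {0..1}"
    by (rule inj_onI) (metis p_def)
  then have "infinite (p ` {0..1})" by (simp add: finite_image_iff)
  moreover have "p ` {0..1} \<subseteq> topspace (nsphere n)" using inS by auto
  ultimately show ?thesis using finite_subset by blast
qed

lemma hemisphere_chart:
  fixes n :: nat
  defines "Np \<equiv> {x \<in> topspace (nsphere n). x n > 0}"
    and "B \<equiv> {u \<in> topspace (Euclidean_space n). (\<Sum>i<n. u i ^ 2) < 1}"
  shows "openin (nsphere n) Np" "openin (Euclidean_space n) B"
    "subtopology (nsphere n) Np homeomorphic_space subtopology (Euclidean_space n) B"
proof -
  show "openin (nsphere n) Np"
    unfolding Np_def
    using openin_continuous_map_preimage[OF continuous_map_nsphere_projection[of n n], of "{0<..}"]
    by simp
  have cs: "continuous_map (Euclidean_space n) euclideanreal (\<lambda>u. \<Sum>i<n. u i ^ 2)"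
    by (intro continuous_intros cm_E_proj) auto
  show "openin (Euclidean_space n) B"
    unfolding B_def using openin_continuous_map_preimage[OF cs, of "{..<1}"] by simp
  define \<phi> where "\<phi> = (\<lambda>x::nat\<Rightarrow>real. \<lambda>i. if i < n then x i else 0)"
  define \<phi>' where "\<phi>' = (\<lambda>u::nat\<Rightarrow>real. \<lambda>i. if i < n then u i else if i = n then sqrt (1 - (\<Sum>j<n. u j ^ 2)) else 0)"
  have sumphi: "(\<Sum>i<n. \<phi> x i ^ 2) = (\<Sum>i<n. x i ^ 2)" for x
    unfolding \<phi>_def by (rule sum.cong) auto
  have sumphi': "(\<Sum>i<n. \<phi>' u i ^ 2) = (\<Sum>i<n. u i ^ 2)" for u
    unfolding \<phi>'_def by (rule sum.cong) auto
  have ts: "topspace (subtopology (nsphere n) Np) = Np"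
    unfolding Np_def by auto
  have tb: "topspace (subtopology (Euclidean_space n) B) = B"
    unfolding B_def by auto
  have xNp: "(\<Sum>i<n. x i ^ 2) + x n ^ 2 = 1" "x n > 0" "\<forall>i>n. x i = 0" if "x \<in> Np" for x
    using that sum_atMost_split[of "\<lambda>i. x i ^ 2" n] by (auto simp: Np_def topspace_nsphere')
  have uB: "(\<Sum>i<n. u i ^ 2) < 1" "\<forall>i\<ge>n. u i = 0" if "u \<in> B" for u
    using that by (auto simp: B_def topspace_Euclidean_space)
  have "homeomorphic_maps (subtopology (nsphere n) Np) (subtopology (Euclidean_space n) B) \<phi> \<phi>'"
    unfolding homeomorphic_maps_def
  proof (intro conjI ballI)
    have "continuous_map (subtopology (nsphere n) Np) (Euclidean_space n) \<phi>"
      unfolding \<phi>_def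
      by (rule continuous_map_componentwise_Euclidean_space[THEN iffD2])
         (auto intro: continuous_map_from_subtopology[OF continuous_map_nsphere_projection])
    moreover have "\<phi> x \<in> B" if "x \<in> Np" for x
    proof -
      have "x n ^ 2 > 0" using xNp[OF that] by simp
      then have "(\<Sum>i<n. x i ^ 2) < 1" using xNp(1)[OF that] by linarith
      then have "(\<Sum>i<n. \<phi> x i ^ 2) < 1" using sumphi by simp
      then show ?thesis unfolding B_def by (auto simp: topspace_Euclidean_space \<phi>_def)
    qed
    ultimately show "continuous_map (subtopology (nsphere n) Np) (subtopology (Euclidean_space n) B) \<phi>"
      using ts by (auto simp: continuous_map_in_subtopology)
  next
    have "continuous_map (subtopology (Euclidean_space n) B) (nsphere n) \<phi>'"
    proof (rule cm_into_nsphere)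
      fix k
      show "continuous_map (subtopology (Euclidean_space n) B) euclideanreal (\<lambda>x. \<phi>' x k)"
      proof (cases "k < n")
        case True
        then show ?thesis unfolding \<phi>'_def
          by (simp add: continuous_map_from_subtopology[OF cm_E_proj])
      next
        case False
        show ?thesis
        proof (cases "k = n")
          case True
          have "continuous_map (subtopology (Euclidean_space n) B) euclideanreal
                  (\<lambda>u. sqrt (1 - (\<Sum>j<n. u j ^ 2)))"
            by (intro continuous_intros continuous_map_from_subtopology[OF cm_E_proj]) auto
          then show ?thesis using True False unfolding \<phi>'_def by simp
        qed (use False in \<open>simp add: \<phi>'_def\<close>)
      qed
    next
      fix u assume "u \<in> topspace (subtopology (Euclidean_space n) B)"
      then have u: "u \<in> B" using tb by simp
      have "(\<Sum>i\<le>n. \<phi>' u i ^ 2) = (\<Sum>i<n. u i ^ 2) + (sqrt (1 - (\<Sum>j<n. u j ^ 2))) ^ 2"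
        using sum_atMost_split[of "\<lambda>i. \<phi>' u i ^ 2" n] sumphi' by (simp add: \<phi>'_def)
      also have "\<dots> = 1" using uB[OF u] by simp
      finally show "\<phi>' u \<in> topspace (nsphere n)"
        by (auto simp: topspace_nsphere' \<phi>'_def)
    qed
    moreover have "\<phi>' u \<in> Np" if "u \<in> B" for u
    proof -
      have "(\<Sum>i\<le>n. \<phi>' u i ^ 2) = (\<Sum>i<n. u i ^ 2) + (sqrt (1 - (\<Sum>j<n. u j ^ 2))) ^ 2"
        using sum_atMost_split[of "\<lambda>i. \<phi>' u i ^ 2" n] sumphi' by (simp add: \<phi>'_def)
      also have "\<dots> = 1" using uB[OF that] by simp
      finally have "\<phi>' u \<in> topspace (nsphere n)"
        by (auto simp: topspace_nsphere' \<phi>'_def)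
      moreover have "\<phi>' u n > 0" using uB[OF that] by (simp add: \<phi>'_def)
      ultimately show ?thesis by (simp add: Np_def)
    qed
    ultimately show "continuous_map (subtopology (Euclidean_space n) B) (subtopology (nsphere n) Np) \<phi>'"
      using tb by (auto simp: continuous_map_in_subtopology)
  next
    fix x assume "x \<in> topspace (subtopology (nsphere n) Np)"
    then have x: "x \<in> Np" using ts by simp
    have "sqrt (1 - (\<Sum>j<n. x j ^ 2)) = x n"
      using xNp[OF x] by (simp add: real_sqrt_unique algebra_simps)
    then show "\<phi>' (\<phi> x) = x"
      using xNp[OF x] by (auto simp: \<phi>_def \<phi>'_def sumphi[unfolded \<phi>_def] fun_eq_iff)
  next
    fix u assume "u \<in> topspace (subtopology (Euclidean_space n) B)"
    then have u: "u \<in> B" using tb by simp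
    show "\<phi> (\<phi>' u) = u"
      using uB[OF u] by (auto simp: \<phi>_def \<phi>'_def fun_eq_iff)
  qed
  then show "subtopology (nsphere n) Np homeomorphic_space subtopology (Euclidean_space n) B"
    using homeomorphic_space_def by blast
qed

definition sw :: "nat \<Rightarrow> nat \<Rightarrow> nat \<Rightarrow> nat" where
  "sw k n i = (if i = k then n else if i = n then k else i)"

lemma sw_sw [simp]: "sw k n (sw k n i) = i"
  by (auto simp: sw_def)

lemma swap_homeo:
  assumes k: "k \<le> n"
  shows "homeomorphic_map (nsphere n) (nsphere n) (\<lambda>x i. x (sw k n i))"
proof -
  let ?s = "\<lambda>(x::nat\<Rightarrow>real) i. x (sw k n i)"
  have bij: "bij_betw (sw k n) {..n} {..n}"
    by (rule bij_betw_byWitness[where f'="sw k n"]) (use k in \<open>auto simp: sw_def\<close>)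
  have inS: "?s x \<in> topspace (nsphere n)" if "x \<in> topspace (nsphere n)" for x
  proof -
    have "(\<Sum>i\<le>n. x (sw k n i) ^ 2) = (\<Sum>i\<le>n. x i ^ 2)"
      using sum.reindex_bij_betw[OF bij, of "\<lambda>i. x i ^ 2"] by simp
    moreover have "\<forall>i>n. x (sw k n i) = 0" using that k by (auto simp: sw_def topspace_nsphere')
    ultimately show ?thesis using that by (simp add: topspace_nsphere')
  qed
  have c: "continuous_map (nsphere n) (nsphere n) ?s"
    by (rule cm_into_nsphere, rule continuous_map_nsphere_projection, erule inS)
  have "homeomorphic_maps (nsphere n) (nsphere n) ?s ?s"
    unfolding homeomorphic_maps_def using c by simp
  then show ?thesis using homeomorphic_map_maps by blast
qed

lemma refl_homeo:
  "homeomorphic_map (nsphere n) (nsphere n) (\<lambda>x i. if i = n then - x i else x i)"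
proof -
  let ?r = "\<lambda>(x::nat\<Rightarrow>real) i. if i = n then - x i else x i"
  have inS: "?r x \<in> topspace (nsphere n)" if "x \<in> topspace (nsphere n)" for x
  proof -
    have "(\<Sum>i\<le>n. ?r x i ^ 2) = (\<Sum>i\<le>n. x i ^ 2)"
      by (rule sum.cong) auto
    then show ?thesis using that by (simp add: topspace_nsphere')
  qed
  have ck: "continuous_map (nsphere n) euclideanreal (\<lambda>x. ?r x k)" for k
  proof (cases "k = n")
    case True
    then show ?thesis using continuous_map_minus[OF continuous_map_nsphere_projection[of n n]] by simp
  next
    case False
    then show ?thesis using continuous_map_nsphere_projection[of n k] by simp
  qed
  have c: "continuous_map (nsphere n) (nsphere n) ?r"
    by (rule cm_into_nsphere, rule ck, erule inS)
  have "homeomorphic_maps (nsphere n) (nsphere n) ?r ?r"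
    unfolding homeomorphic_maps_def using c by (simp add: fun_eq_iff)
  then show ?thesis using homeomorphic_map_maps by blast
qed

lemma loc_euc_via_homeos:
  assumes N: "openin X N" and Ob: "openin (Euclidean_space n) Ob"
    and hom: "subtopology X N homeomorphic_space subtopology (Euclidean_space n) Ob"
    and T: "\<And>x. x \<in> topspace X \<Longrightarrow> \<exists>T. homeomorphic_map X X T \<and> T x \<in> N"
  shows "loc_euc n X"
  unfolding loc_euc_def
proof
  fix x assume x: "x \<in> topspace X"
  obtain T where T: "homeomorphic_map X X T" "T x \<in> N" using T[OF x] by blast
  define N' where "N' = {y \<in> topspace X. T y \<in> N}"
  have N'o: "openin X N'" unfolding N'_def
    using openin_continuous_map_preimage[OF homeomorphic_imp_continuous_map[OF T(1)] N] .
  have "homeomorphic_map (subtopology X N') (subtopology X N) T"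
  proof (rule homeomorphic_map_subtopologies[OF T(1)])
    have "T ` topspace X = topspace X" using T(1) homeomorphic_imp_surjective_map by blast
    then show "T ` (topspace X \<inter> N') = topspace X \<inter> N" unfolding N'_def by auto
  qed
  then have "subtopology X N' homeomorphic_space subtopology X N" using homeomorphic_space by blast
  then have "subtopology X N' homeomorphic_space subtopology (Euclidean_space n) Ob"
    using hom homeomorphic_space_trans by blast
  then show "\<exists>N Ob. openin X N \<and> x \<in> N \<and> openin (Euclidean_space n) Ob \<and>
      subtopology X N homeomorphic_space subtopology (Euclidean_space n) Ob"
  proof (intro exI[of _ N'] exI[of _ Ob] conjI)
    show "x \<in> N'" using T(2) x unfolding N'_def by blast
  qed (use N'o Ob in auto)
qed

lemma loc_euc_nsphere: "loc_euc n (nsphere n)"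
proof -
  define Np where "Np = {x \<in> topspace (nsphere n). x n > 0}"
  define B where "B = {u \<in> topspace (Euclidean_space n). (\<Sum>i<n. u i ^ 2) < 1}"
  note HC = hemisphere_chart[of n, folded Np_def B_def]
  show ?thesis
  proof (rule loc_euc_via_homeos[OF HC])
    fix x assume x: "x \<in> topspace (nsphere n)"
    have "\<exists>k\<le>n. x k \<noteq> 0"
    proof (rule ccontr)
      assume "\<not> (\<exists>k\<le>n. x k \<noteq> 0)"
      then have "(\<Sum>i\<le>n. x i ^ 2) = 0" by simp
      then show False using x by (simp add: topspace_nsphere')
    qed
    then obtain k where k: "k \<le> n" "x k \<noteq> 0" by blast
    let ?s = "\<lambda>(x::nat\<Rightarrow>real) i. x (sw k n i)"
    let ?r = "\<lambda>(x::nat\<Rightarrow>real) i. if i = n then - x i else x i"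
    have hs: "homeomorphic_map (nsphere n) (nsphere n) ?s" by (rule swap_homeo[OF k(1)])
    have hr: "homeomorphic_map (nsphere n) (nsphere n) ?r" by (rule refl_homeo)
    have sx: "?s x \<in> topspace (nsphere n)" "?s x n = x k"
      using hs x homeomorphic_imp_surjective_map by (blast, simp add: sw_def)
    show "\<exists>T. homeomorphic_map (nsphere n) (nsphere n) T \<and> T x \<in> Np"
    proof (cases "x k > 0")
      case True
      then show ?thesis using hs sx by (intro exI[of _ ?s]) (simp add: Np_def)
    next
      case False
      then have neg: "- x k > 0" using k(2) by simp
      have "?r ` topspace (nsphere n) \<subseteq> topspace (nsphere n)"
        by (rule continuous_map_image_subset_topspace[OF homeomorphic_imp_continuous_map[OF hr]])
      then have "?r (?s x) \<in> topspace (nsphere n)" using sx(1) by blast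
      moreover have "homeomorphic_map (nsphere n) (nsphere n) (?r \<circ> ?s)"
        by (rule homeomorphic_map_compose[OF hs hr])
      ultimately show ?thesis using neg sx(2)
        by (intro exI[of _ "?r \<circ> ?s"]) (simp add: Np_def)
    qed
  qed
qed

lemma sphere_reconstructible:
  assumes n: "n \<ge> 1" shows "reconstructible_in (nsphere n) TYPE('b)"
  unfolding reconstructible_in_def is_reconstruction_def same_deck_def
proof (intro allI impI)
  fix Z :: "'b topology"
  let ?S = "nsphere n"
  assume deck: "(\<forall>z\<in>topspace Z. \<exists>x\<in>topspace ?S. card_at Z z homeomorphic_space card_at ?S x) \<and>
     (\<forall>x\<in>topspace ?S. \<exists>z\<in>topspace Z. card_at ?S x homeomorphic_space card_at Z z)"
  then have D1: "\<And>z. z \<in> topspace Z \<Longrightarrow> \<exists>x\<in>topspace ?S. card_at Z z homeomorphic_space card_at ?S x"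
    and D2: "\<And>x. x \<in> topspace ?S \<Longrightarrow> \<exists>z\<in>topspace Z. card_at ?S x homeomorphic_space card_at Z z"
    by auto
  have t1S: "t1_space ?S" using Hausdorff_nsphere Hausdorff_imp_t1_space by blast
  have cardS_open: "\<And>x. x \<in> topspace ?S \<Longrightarrow> openin ?S (topspace ?S - {x})"
    using t1_space_closedin_singleton[THEN iffD1, OF t1S] by (blast intro: openin_diff)
  have cardS_H: "\<And>x. Hausdorff_space (card_at ?S x)"
    by (simp add: card_at_def Hausdorff_space_subtopology Hausdorff_nsphere)
  have cardS_inf: "\<And>x. infinite (topspace (card_at ?S x))"
    using infinite_nsphere[OF n] by simp
  have cardS_L: "\<And>x. x \<in> topspace ?S \<Longrightarrow> loc_euc n (card_at ?S x)"
    unfolding card_at_def using loc_euc_open_subspace[OF loc_euc_nsphere] cardS_open by blast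
  obtain p0 where p0: "p0 \<in> topspace ?S" using in_topspace_nsphere by blast
  obtain q where q: "q \<in> topspace Z" "card_at ?S p0 homeomorphic_space card_at Z q"
    using D2[OF p0] by auto
  have "infinite (topspace (card_at Z q))"
    using homeomorphic_space_infinite[OF q(2) cardS_inf] by simp
  then have infZ: "infinite (topspace Z)" by (auto intro: finite_subset)
  have HC: "\<And>z. z \<in> topspace Z \<Longrightarrow> Hausdorff_space (card_at Z z)"
    using D1 homeomorphic_Hausdorff_space cardS_H by blast
  have HZ: "Hausdorff_space Z" by (rule Hausdorff_from_cards[OF HC infZ])
  have t1Z: "t1_space Z" by (rule T1_from_cards[OF HC infZ])
  have cardopen: "\<And>w. w \<in> topspace Z \<Longrightarrow> openin Z (topspace Z - {w})"
    using t1_space_closedin_singleton[THEN iffD1, OF t1Z] by (blast intro: openin_diff)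
  have LZ: "loc_euc n Z"
  proof (rule loc_euc_cover)
    fix z assume z: "z \<in> topspace Z"
    obtain w where w: "w \<in> topspace Z" "w \<notin> {z}" using inf_pick[OF infZ, of "{z}"] by blast
    obtain x where x: "x \<in> topspace ?S" "card_at Z w homeomorphic_space card_at ?S x"
      using D1[OF w(1)] by blast
    have "loc_euc n (card_at Z w)"
      using loc_euc_homeomorphic[OF x(2)[unfolded homeomorphic_space_sym[of "card_at Z w"]] cardS_L[OF x(1)]] .
    then show "\<exists>S. openin Z S \<and> z \<in> S \<and> loc_euc n (subtopology Z S)"
      using cardopen[OF w(1)] z w(2) unfolding card_at_def by blast
  qed
  obtain h k where hk: "homeomorphic_maps (card_at Z q) (card_at ?S p0) h k"
    using q(2) homeomorphic_space_sym homeomorphic_space_def by blast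
  define H where "H = (\<lambda>z. if z = q then p0 else h z)"
  have contH: "continuous_map Z ?S H" and surjH: "H ` topspace Z = topspace ?S"
    and injH: "inj_on H (topspace Z)"
    using ext_map[OF HZ t1Z compact_nsphere q(1) p0 hk] unfolding H_def by auto
  have "open_map Z ?S H" by (rule loc_euc_open_map[OF LZ loc_euc_nsphere contH injH])
  then have "homeomorphic_map Z ?S H"
    using bijective_open_imp_homeomorphic_map contH surjH injH by blast
  then show "Z homeomorphic_space ?S" using homeomorphic_space by blast
qed

theorem theorem2p3:
  shows "reconstructible_in (top_of_set {0..1::real}) TYPE('b)
     \<and> (\<forall>n::nat. n \<ge> 1 \<longrightarrow> reconstructible_in (nsphere n) TYPE('b))"
  using interval_reconstructible sphere_reconstructible by blast

end
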